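(* Let $P(z)=\sum_{k=0}^mc_ke^{\alpha_kz}$ with $c_k\ge0$, $\alpha_k\in\mathbb{R}$ and $\max_k|\alpha_k|\le\omega$, where $\omega>0$. Then for every $t\in\mathbb{R}$ and every $\tau\in\mathbb{C}$ with $|\tau-t|\le\frac{1}{5\omega}$, \[ \tfrac34P(t)\le|P(\tau)|\le\tfrac54P(t). \]
   Context: Such $P$ is called an exponential polynomial with real exponents of width at most $\omega$. *)

theory Defs
  imports "HOL-Analysis.Analysis"
begin

end

theory Submission
  imports Defs
begin

lemma exp_fifth: "exp (1/5::real) \<le> 5/4"
proof -
  have "exp (1/5::real) ^ 5 = exp 1" by (simp add: exp_of_nat_mult[symmetric])
  also have "\<dots> \<le> 3" using exp_le by simp
  also have "\<dots> \<le> (5/4::real)^5" by (simp add: power_numeral_reduce)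
  finally have "exp (1/5::real) ^ 5 \<le> (5/4)^5" .
  thus ?thesis using power_mono_iff[of "exp (1/5::real)" "5/4" 5] by simp
qed

lemma exp_minus1_bound:
  fixes w :: complex assumes "cmod w \<le> 1/5"
  shows "cmod (exp w - 1) \<le> 1/4"
proof -
  have "cmod (exp w - 1) \<le> exp (cmod w) * cmod w"
    using Taylor_exp_field[of w 0] by simp
  also have "\<dots> \<le> 5/4 * (1/5)"
  proof (rule mult_mono)
    show "exp (cmod w) \<le> 5/4" using exp_fifth assms by (meson exp_le_cancel_iff order_trans)
  qed (use assms in auto)
  finally show ?thesis by simp
qed

theorem lemma3p8:
  fixes m :: nat and c \<alpha> :: "nat \<Rightarrow> real" and \<omega> t :: real and \<tau> :: complex
    and P :: "complex \<Rightarrow> complex"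
  assumes P_def: "\<And>z. P z = (\<Sum>k\<le>m. complex_of_real (c k) * exp (complex_of_real (\<alpha> k) * z))"
    and c_nonneg: "\<And>k. k \<le> m \<Longrightarrow> c k \<ge> 0"
    and width: "\<And>k. k \<le> m \<Longrightarrow> \<bar>\<alpha> k\<bar> \<le> \<omega>"
    and omega_pos: "\<omega> > 0"
    and close: "cmod (\<tau> - complex_of_real t) \<le> 1 / (5 * \<omega>)"
  shows "3/4 * Re (P (complex_of_real t)) \<le> cmod (P \<tau>)
         \<and> cmod (P \<tau>) \<le> 5/4 * Re (P (complex_of_real t))"
proof -
  define S where "S = (\<Sum>k\<le>m. c k * exp (\<alpha> k * t))"
  have Pt: "P (complex_of_real t) = complex_of_real S"
    unfolding P_def S_def by (simp add: exp_of_real[symmetric])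
  have diff: "P \<tau> - P (complex_of_real t) =
     (\<Sum>k\<le>m. complex_of_real (c k * exp (\<alpha> k * t)) * (exp (complex_of_real (\<alpha> k) * (\<tau> - complex_of_real t)) - 1))"
    unfolding P_def sum_subtractf[symmetric]
  proof (rule sum.cong[OF refl])
    fix k
    have "exp (complex_of_real (\<alpha> k) * \<tau>) = exp (complex_of_real (\<alpha> k * t)) * exp (complex_of_real (\<alpha> k) * (\<tau> - complex_of_real t))"
      by (simp add: exp_add[symmetric] algebra_simps)
    thus "complex_of_real (c k) * exp (complex_of_real (\<alpha> k) * \<tau>) -
         complex_of_real (c k) * exp (complex_of_real (\<alpha> k) * complex_of_real t) =
         complex_of_real (c k * exp (\<alpha> k * t)) * (exp (complex_of_real (\<alpha> k) * (\<tau> - complex_of_real t)) - 1)"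
      by (simp add: exp_of_real[symmetric] algebra_simps)
  qed
  have "cmod (P \<tau> - P (complex_of_real t)) \<le> (\<Sum>k\<le>m. cmod (complex_of_real (c k * exp (\<alpha> k * t)) * (exp (complex_of_real (\<alpha> k) * (\<tau> - complex_of_real t)) - 1)))"
    unfolding diff by (rule norm_sum)
  also have "\<dots> \<le> (\<Sum>k\<le>m. c k * exp (\<alpha> k * t) * (1/4))"
  proof (rule sum_mono)
    fix k assume k: "k \<in> {..m}"
    have ck: "c k \<ge> 0" using c_nonneg k by auto
    have "cmod (complex_of_real (\<alpha> k) * (\<tau> - complex_of_real t)) = \<bar>\<alpha> k\<bar> * cmod (\<tau> - complex_of_real t)"
      by (simp add: norm_mult)
    also have "\<dots> \<le> \<omega> * (1 / (5 * \<omega>))"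
      using width[of k] k close by (intro mult_mono) auto
    also have "\<dots> = 1/5" using omega_pos by simp
    finally have "cmod (exp (complex_of_real (\<alpha> k) * (\<tau> - complex_of_real t)) - 1) \<le> 1/4"
      by (rule exp_minus1_bound)
    then show "cmod (complex_of_real (c k * exp (\<alpha> k * t)) * (exp (complex_of_real (\<alpha> k) * (\<tau> - complex_of_real t)) - 1)) \<le> c k * exp (\<alpha> k * t) * (1/4)"
    proof -
      have "cmod (complex_of_real (c k * exp (\<alpha> k * t))) = c k * exp (\<alpha> k * t)" using ck by (subst norm_of_real) simp
      thus ?thesis using \<open>cmod (exp (complex_of_real (\<alpha> k) * (\<tau> - complex_of_real t)) - 1) \<le> 1/4\<close> ck
        by (simp only: norm_mult) (intro mult_left_mono, auto)
    qed
  qed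
  also have "\<dots> = S / 4" unfolding S_def sum_distrib_right[symmetric] by simp
  finally have D: "cmod (P \<tau> - complex_of_real S) \<le> S / 4" using Pt by simp
  have S0: "S \<ge> 0" unfolding S_def using c_nonneg by (intro sum_nonneg) auto
  have "cmod (P \<tau>) \<le> cmod (complex_of_real S) + cmod (P \<tau> - complex_of_real S)"
    using norm_triangle_ineq[of "complex_of_real S" "P \<tau> - complex_of_real S"] by simp
  moreover have "cmod (complex_of_real S) \<le> cmod (P \<tau>) + cmod (P \<tau> - complex_of_real S)"
    using norm_triangle_ineq4[of "P \<tau>" "P \<tau> - complex_of_real S"] by simp
  ultimately show ?thesis using D S0 Pt by auto
qed

end
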